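(* Let $\mathcal{C}_{\mathrm{norm}}:=\operatorname{conv}(\{\Sigma_e/\operatorname{Tr}(\Sigma_e)\}_{e\in\mathcal{E}})$ and let $\mathcal{P}_{\mathrm{norm}}$ be the set of distributions $P$ on $\mathbb{R}^{1\times p}$ with $\mathbb{E}_P[\mathbf{x}]=0$, finite second moments, $\mathbb{E}_P\|\mathbf{x}\|_2^2>0$ and $\mathbb{E}_P[\mathbf{x}^\top\mathbf{x}]/\mathbb{E}_P[\|\mathbf{x}\|_2^2]\in\mathcal{C}_{\mathrm{norm}}$. Let $\mathcal{L}$ be one of $\mathcal{L}_{\mathrm{normRCS}}$, $-\mathcal{L}_{\mathrm{normVar}}$, $\mathcal{L}_{\mathrm{normReg}}$ and let $V_k^*\in\arg\min_{V\in\mathcal{O}_{p\times k}}\max_{e\in\mathcal{E}}\mathcal{L}(V;P_e)$ (i.e. $V_k^*$ solves norm-maxRCS, norm-minPCA, norm-maxRegret respectively). Then: (i) for all $V\in\mathcal{O}_{p\times k}$, $\sup_{P\in\mathcal{P}_{\mathrm{norm}}}\mathcal{L}(V;P)=\max_{e\in\mathcal{E}}\mathcal{L}(V;P_e)$; (ii) for all $V,W\in\mathcal{O}_{p\times k}$, if $\max_e\mathcal{L}(V;P_e)<\max_e\mathcal{L}(W;P_e)$ then $\sup_{P\in\mathcal{P}_{\mathrm{norm}}}\mathcal{L}(V;P)<\sup_{P\in\mathcal{P}_{\mathrm{norm}}}\mathcal{L}(W;P)$; (iii) $V_k^*\in\arg\min_{V\in\mathcal{O}_{p\times k}}\sup_{P\in\mathcal{P}_{\mathrm{norm}}}\mathcal{L}(V;P)$;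 (iv) the conclusion of (iii) does not hold in general for the solutions of poolPCA and sepPCA.
   Context: Let $p\ge 1$ and $1\le k\le p$ be integers and $\mathcal{O}_{p\times k}:=\{V\in\mathbb{R}^{p\times k}: V^\top V=I_k\}$. Source domains are $\mathcal{E}=\{1,\dots,E\}$; for each $e$, $P_e$ is a distribution on $\mathbb{R}^{1\times p}$ with mean zero and finite covariance $\Sigma_e=\mathbb{E}[\mathbf{x}^\top\mathbf{x}]$, $\operatorname{Tr}(\Sigma_e)>0$; weights $w_e>0$, $\sum_e w_e=1$. For symmetric PSD $\Sigma$ with positive trace and $V\in\mathcal{O}_{p\times k}$: $\mathcal{L}_{\mathrm{normVar}}(V;\Sigma)=\operatorname{Tr}(V^\top\Sigma V)/\operatorname{Tr}(\Sigma)$, $\mathcal{L}_{\mathrm{normRCS}}(V;\Sigma)=(\operatorname{Tr}(\Sigma)-\operatorname{Tr}(V^\top\Sigma V))/\operatorname{Tr}(\Sigma)$ ($=\mathbb{E}\|\mathbf{x}-\mathbf{x}VV^\top\|_2^2/\mathbb{E}\|\mathbf{x}\|_2^2$), $\mathcal{L}_{\mathrm{normReg}}(V;\Sigma)=\mathcal{L}_{\mathrm{normRCS}}(V;\Sigma)-\min_{W\in\mathcal{O}_{p\times k}}\mathcal{L}_{\mathrm{normRCS}}(W;\Sigma)$; for $P$ with covariance $\Sigma$, $\mathcal{L}(V;P):=\mathcal{L}(V;\Sigma)$. poolPCA: $V^{\mathrm{pool}}\in\arg\max_V\operatorname{Tr}(V^\top(\sum_e w_e\Sigma_e)V)$. sepPCA: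 with $V^{*,e}\in\arg\max_V\operatorname{Tr}(V^\top\Sigma_eV)$ and $e_0$ the smallest index minimizing $\operatorname{Tr}((V^{*,e})^\top\Sigma_eV^{*,e})$, $V^{\mathrm{sep}}:=V^{*,e_0}$. *)

theory Defs
  imports "HOL-Probability.Probability"
begin

text \<open>Row vectors in R^{1 x p} are modelled as real^'p; p x k matrices as real^'k^'p
  (rows indexed by 'p, columns by 'k).\<close>

definition orthSt :: "(real^'k^'p) set" where
  "orthSt = {V. transpose V ** V = mat 1}"

definition cov :: "(real^'p) measure \<Rightarrow> real^'p^'p" where
  "cov M = (\<chi> i j. \<integral>x. (x $ i) * (x $ j) \<partial>M)"

definition centered_dist :: "(real^'p) measure \<Rightarrow> bool" where
  "centered_dist M \<longleftrightarrow> prob_space M \<and> sets M = sets borel \<and>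
     integrable M (\<lambda>x. x) \<and> integrable M (\<lambda>x. (norm x)\<^sup>2) \<and> (\<integral>x. x \<partial>M) = 0"

definition normVar :: "real^'k^'p \<Rightarrow> real^'p^'p \<Rightarrow> real" where
  "normVar V S = trace (transpose V ** S ** V) / trace S"

definition normRCS :: "real^'k^'p \<Rightarrow> real^'p^'p \<Rightarrow> real" where
  "normRCS V S = (trace S - trace (transpose V ** S ** V)) / trace S"

definition normReg :: "real^'k^'p \<Rightarrow> real^'p^'p \<Rightarrow> real" where
  "normReg V S = normRCS V S - (INF W\<in>(orthSt :: (real^'k^'p) set). normRCS W S)"

definition loss_choices :: "(real^'k^'p \<Rightarrow> real^'p^'p \<Rightarrow> real) set" where
  "loss_choices = {normRCS, (\<lambda>V S. - normVar V S), normReg}"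

definition Pnorm :: "(nat \<Rightarrow> (real^'p) measure) \<Rightarrow> nat \<Rightarrow> (real^'p) measure set" where
  "Pnorm P E = {Q. centered_dist Q \<and> (\<integral>x. (norm x)\<^sup>2 \<partial>Q) > 0 \<and>
      (1 / (\<integral>x. (norm x)\<^sup>2 \<partial>Q)) *\<^sub>R cov Q \<in>
        convex hull ((\<lambda>e. (1 / trace (cov (P e))) *\<^sub>R cov (P e)) ` {1..E})}"

definition maxLoss :: "(real^'k^'p \<Rightarrow> real^'p^'p \<Rightarrow> real) \<Rightarrow> (nat \<Rightarrow> (real^'p) measure) \<Rightarrow> nat
    \<Rightarrow> real^'k^'p \<Rightarrow> real" where
  "maxLoss L P E V = Max ((\<lambda>e. L V (cov (P e))) ` {1..E})"

definition supLoss :: "(real^'k^'p \<Rightarrow> real^'p^'p \<Rightarrow> real) \<Rightarrow> (nat \<Rightarrow> (real^'p) measure) \<Rightarrow> nat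
    \<Rightarrow> real^'k^'p \<Rightarrow> real" where
  "supLoss L P E V = (SUP Q\<in>Pnorm P E. L V (cov Q))"

definition argminOn :: "(real^'k^'p) set \<Rightarrow> (real^'k^'p \<Rightarrow> real) \<Rightarrow> (real^'k^'p) set" where
  "argminOn A f = {V\<in>A. \<forall>W\<in>A. f V \<le> f W}"

definition poolPCA_sols :: "(nat \<Rightarrow> (real^'p) measure) \<Rightarrow> (nat \<Rightarrow> real) \<Rightarrow> nat \<Rightarrow> (real^'k^'p) set" where
  "poolPCA_sols P w E = {V\<in>orthSt. \<forall>W\<in>(orthSt :: (real^'k^'p) set).
      trace (transpose W ** (\<Sum>e\<in>{1..E}. w e *\<^sub>R cov (P e)) ** W)
        \<le> trace (transpose V ** (\<Sum>e\<in>{1..E}. w e *\<^sub>R cov (P e)) ** V)}"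

definition pcaSols :: "real^'p^'p \<Rightarrow> (real^'k^'p) set" where
  "pcaSols S = {V\<in>orthSt. \<forall>W\<in>(orthSt :: (real^'k^'p) set). trace (transpose W ** S ** W) \<le> trace (transpose V ** S ** V)}"

text \<open>sepPCA output for a given choice Vs e of per-environment PCA solutions:
  e0 is the smallest index minimising the explained variance.\<close>
definition sepPCA :: "(nat \<Rightarrow> (real^'p) measure) \<Rightarrow> nat \<Rightarrow> (nat \<Rightarrow> real^'k^'p) \<Rightarrow> real^'k^'p" where
  "sepPCA P E Vs = (let f = (\<lambda>e. trace (transpose (Vs e) ** cov (P e) ** Vs e)) in
     Vs (LEAST e. e \<in> {1..E} \<and> (\<forall>e'\<in>{1..E}. f e \<le> f e')))"

definition valid_instance :: "(nat \<Rightarrow> (real^'p) measure) \<Rightarrow> (nat \<Rightarrow> real) \<Rightarrow> nat \<Rightarrow> bool" where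
  "valid_instance P w E \<longleftrightarrow> 1 \<le> E \<and>
     (\<forall>e\<in>{1..E}. centered_dist (P e) \<and> trace (cov (P e)) > 0 \<and> w e > 0) \<and>
     (\<Sum>e\<in>{1..E}. w e) = 1"

end

theory Submission
  imports Defs
begin


definition tv :: "real^'k^'p \<Rightarrow> real^'p^'p \<Rightarrow> real" where
  "tv V S = trace (transpose V ** S ** V)"

lemma tv_formula: "tv V S = (\<Sum>a\<in>UNIV. \<Sum>j\<in>UNIV. \<Sum>i\<in>UNIV. V$i$a * S$i$j * V$j$a)"
  unfolding tv_def trace_def matrix_matrix_mult_def transpose_def
  by (simp add: sum_distrib_left sum_distrib_right mult.assoc mult.commute mult.left_commute)

lemma tv_add: "tv V (S + T) = tv V S + tv V T"
  unfolding tv_formula by (simp add: sum.distrib algebra_simps)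

lemma tv_scale: "tv V (c *\<^sub>R S) = c * tv V S"
  unfolding tv_formula by (simp add: sum_distrib_left algebra_simps)

lemma tv_zero: "tv V 0 = 0"
  unfolding tv_formula by simp

lemma tv_sum: "tv V (\<Sum>x\<in>I. u x *\<^sub>R f x) = (\<Sum>x\<in>I. u x * tv V (f x))"
proof (induction I rule: infinite_finite_induct)
  case (infinite A) then show ?case by (simp add: tv_zero)
next
  case empty then show ?case by (simp add: tv_zero)
next
  case (insert x F) then show ?case by (simp add: tv_add tv_scale)
qed

lemma trace_scale: "trace (c *\<^sub>R (S::real^'n^'n)) = c * trace S"
  unfolding trace_def by (simp add: sum_distrib_left)

lemma trace_sum: "trace (\<Sum>x\<in>I. u x *\<^sub>R (f x :: real^'n^'n)) = (\<Sum>x\<in>I. u x * trace (f x))"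
proof (induction I rule: infinite_finite_induct)
  case (infinite A) then show ?case by (simp add: trace_def)
next
  case empty then show ?case using trace_0 by (simp add: trace_def)
next
  case (insert x F) then show ?case by (simp add: trace_add trace_scale)
qed


lemma orth_entry:
  assumes "V \<in> orthSt" shows "\<bar>V$i$a\<bar> \<le> (1::real)"
proof -
  have "(transpose V ** V)$a$a = 1" using assms by (simp add: orthSt_def mat_def)
  hence s: "(\<Sum>j\<in>UNIV. V$j$a * V$j$a) = 1"
    by (simp add: matrix_matrix_mult_def transpose_def)
  have "V$i$a * V$i$a \<le> (\<Sum>j\<in>UNIV. V$j$a * V$j$a)"
    by (rule member_le_sum) auto
  hence "(V$i$a)^2 \<le> 1" using s by (simp add: power2_eq_square)
  thus ?thesis by (simp add: abs_square_le_1)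
qed

lemma orthSt_nonempty:
  assumes "CARD('k) \<le> CARD('p)" shows "\<exists>V::real^'k^'p. V \<in> orthSt"
proof -
  obtain f :: "'k \<Rightarrow> 'p" where f: "inj_on f UNIV"
    using card_le_inj[of "UNIV::'k set" "UNIV::'p set"] assms by auto
  define V :: "real^'k^'p" where "V = (\<chi> i j. if i = f j then 1 else 0)"
  have "transpose V ** V = mat 1"
  proof -
    { fix a b :: 'k
      have "(transpose V ** V)$a$b = (\<Sum>i\<in>UNIV. (if i = f a then 1 else 0) * (if i = f b then 1 else (0::real)))"
        by (simp add: matrix_matrix_mult_def transpose_def V_def)
      also have "\<dots> = (\<Sum>i\<in>UNIV. if i = f a then (if f a = f b then 1 else 0) else (0::real))"
        by (rule sum.cong) auto
      also have "\<dots> = (if a = b then 1 else 0)"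
        using f by (auto simp: inj_on_def)
      finally have "(transpose V ** V)$a$b = mat 1 $a$b" by (simp add: mat_def) }
    thus ?thesis by (simp add: vec_eq_iff)
  qed
  thus ?thesis by (auto simp: orthSt_def)
qed

lemma tv_bound:
  assumes "(W::real^'k^'p) \<in> orthSt" shows "\<bar>tv W S\<bar> \<le> real CARD('k) * (\<Sum>j\<in>UNIV. \<Sum>i\<in>UNIV. \<bar>S$i$j\<bar>)"
proof -
  have "\<bar>tv W S\<bar> \<le> (\<Sum>a\<in>UNIV. \<bar>\<Sum>j\<in>UNIV. \<Sum>i\<in>UNIV. W$i$a * S$i$j * W$j$a\<bar>)"
    unfolding tv_formula by (rule sum_abs)
  also have "\<dots> \<le> (\<Sum>a\<in>(UNIV::'k set). (\<Sum>j\<in>UNIV. \<Sum>i\<in>UNIV. \<bar>S$i$j\<bar>))"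
  proof (rule sum_mono)
    fix a
    have "\<bar>\<Sum>j\<in>UNIV. \<Sum>i\<in>UNIV. W$i$a * S$i$j * W$j$a\<bar> \<le> (\<Sum>j\<in>UNIV. \<bar>\<Sum>i\<in>UNIV. W$i$a * S$i$j * W$j$a\<bar>)"
      by (rule sum_abs)
    also have "\<dots> \<le> (\<Sum>j\<in>UNIV. \<Sum>i\<in>UNIV. \<bar>W$i$a * S$i$j * W$j$a\<bar>)"
      by (rule sum_mono, rule sum_abs)
    also have "\<dots> \<le> (\<Sum>j\<in>UNIV. \<Sum>i\<in>UNIV. \<bar>S$i$j\<bar>)"
    proof (rule sum_mono, rule sum_mono)
      fix i j
      have "\<bar>W$i$a * S$i$j * W$j$a\<bar> = \<bar>W$i$a\<bar> * \<bar>S$i$j\<bar> * \<bar>W$j$a\<bar>" by (simp add: abs_mult)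
      also have "\<dots> \<le> 1 * \<bar>S$i$j\<bar> * 1"
        using orth_entry[OF assms, of i a] orth_entry[OF assms, of j a]
        by (intro mult_mono) auto
      finally show "\<bar>W$i$a * S$i$j * W$j$a\<bar> \<le> \<bar>S$i$j\<bar>" by simp
    qed
    finally show "\<bar>\<Sum>j\<in>UNIV. \<Sum>i\<in>UNIV. W$i$a * S$i$j * W$j$a\<bar> \<le> (\<Sum>j\<in>UNIV. \<Sum>i\<in>UNIV. \<bar>S$i$j\<bar>)" .
  qed
  also have "\<dots> = real CARD('k) * (\<Sum>j\<in>UNIV. \<Sum>i\<in>UNIV. \<bar>S$i$j\<bar>)" by simp
  finally show ?thesis .
qed

lemma normRCS_tv: "normRCS V S = (trace S - tv V S) / trace S"
  by (simp add: normRCS_def tv_def)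

lemma normVar_tv: "normVar V S = tv V S / trace S"
  by (simp add: normVar_def tv_def)

lemma normRCS_bdd: "bdd_below ((\<lambda>W. normRCS W S) ` (orthSt :: (real^'k^'p) set))"
proof -
  define B where "B = (\<bar>trace S\<bar> + real CARD('k) * (\<Sum>j\<in>UNIV. \<Sum>i\<in>UNIV. \<bar>S$i$j\<bar>)) / \<bar>trace S\<bar>"
  have "- B \<le> normRCS W S" if "W \<in> orthSt" for W :: "real^'k^'p"
  proof -
    have "\<bar>trace S - tv W S\<bar> \<le> \<bar>trace S\<bar> + real CARD('k) * (\<Sum>j\<in>UNIV. \<Sum>i\<in>UNIV. \<bar>S$i$j\<bar>)"
      using tv_bound[OF that, of S] by linarith
    hence "\<bar>normRCS W S\<bar> \<le> B" unfolding normRCS_tv B_def abs_divide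
      by (intro divide_right_mono) auto
    thus ?thesis by linarith
  qed
  thus ?thesis by (auto simp: bdd_below_def)
qed

lemma normRCS_scale: "c > 0 \<Longrightarrow> normRCS V (c *\<^sub>R S) = normRCS V S"
  unfolding normRCS_tv tv_scale trace_scale
  by (cases "trace S = 0") (simp_all add: field_simps)

lemma normVar_scale: "c > 0 \<Longrightarrow> normVar V (c *\<^sub>R S) = normVar V S"
  unfolding normVar_tv tv_scale trace_scale
  by (cases "trace S = 0") (simp_all add: field_simps)

lemma normReg_scale: assumes "c > 0" shows "normReg V (c *\<^sub>R S) = normReg V S"
  unfolding normReg_def by (simp add: normRCS_scale[OF assms])

lemma loss_scale: "L \<in> loss_choices \<Longrightarrow> c > 0 \<Longrightarrow> L V (c *\<^sub>R S) = L V S"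
  unfolding loss_choices_def using normRCS_scale normVar_scale normReg_scale by auto


lemma normRCS_comb:
  assumes "\<forall>x\<in>I. trace x = 1" "sum u I = 1"
  shows "normRCS W (\<Sum>x\<in>I. u x *\<^sub>R x) = (\<Sum>x\<in>I. u x * normRCS W x)"
proof -
  have t: "trace (\<Sum>x\<in>I. u x *\<^sub>R x) = 1"
    using trace_sum[of u id I] assms by simp
  have "normRCS W (\<Sum>x\<in>I. u x *\<^sub>R x) = 1 - (\<Sum>x\<in>I. u x * tv W x)"
    unfolding normRCS_tv t using tv_sum[of W u id I] by simp
  also have "\<dots> = (\<Sum>x\<in>I. u x * (1 - tv W x))"
    using assms(2) by (simp add: sum_subtractf right_diff_distrib)
  also have "\<dots> = (\<Sum>x\<in>I. u x * normRCS W x)"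
    by (rule sum.cong) (use assms(1) in \<open>auto simp: normRCS_tv\<close>)
  finally show ?thesis .
qed

lemma normVar_comb:
  assumes "\<forall>x\<in>I. trace x = 1" "sum u I = 1"
  shows "normVar W (\<Sum>x\<in>I. u x *\<^sub>R x) = (\<Sum>x\<in>I. u x * normVar W x)"
proof -
  have t: "trace (\<Sum>x\<in>I. u x *\<^sub>R x) = 1"
    using trace_sum[of u id I] assms by simp
  have "normVar W (\<Sum>x\<in>I. u x *\<^sub>R x) = (\<Sum>x\<in>I. u x * tv W x)"
    unfolding normVar_tv t using tv_sum[of W u id I] by simp
  also have "\<dots> = (\<Sum>x\<in>I. u x * normVar W x)"
    by (rule sum.cong) (use assms(1) in \<open>auto simp: normVar_tv\<close>)
  finally show ?thesis .
qed

lemma normReg_comb: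
  assumes "\<forall>x\<in>I. trace x = 1" "sum u I = 1" "\<forall>x\<in>I. u x \<ge> 0"
    and ne: "(orthSt :: (real^'k^'p) set) \<noteq> {}"
  shows "normReg (V::real^'k^'p) (\<Sum>x\<in>I. u x *\<^sub>R x) \<le> (\<Sum>x\<in>I. u x * normReg V x)"
proof -
  define m where "m S = (INF W\<in>(orthSt :: (real^'k^'p) set). normRCS W S)" for S
  have low: "(\<Sum>x\<in>I. u x * m x) \<le> m (\<Sum>x\<in>I. u x *\<^sub>R x)"
    unfolding m_def
  proof (rule cINF_greatest[OF ne])
    fix W :: "real^'k^'p" assume W: "W \<in> orthSt"
    have "(\<Sum>x\<in>I. u x * (INF W\<in>(orthSt :: (real^'k^'p) set). normRCS W x)) \<le> (\<Sum>x\<in>I. u x * normRCS W x)"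
    proof (rule sum_mono)
      fix x assume "x \<in> I"
      have "(INF W\<in>(orthSt :: (real^'k^'p) set). normRCS W x) \<le> normRCS W x"
        by (rule cINF_lower[OF normRCS_bdd W])
      thus "u x * (INF W\<in>(orthSt :: (real^'k^'p) set). normRCS W x) \<le> u x * normRCS W x"
        using assms(3) \<open>x \<in> I\<close> by (simp add: mult_left_mono)
    qed
    also have "\<dots> = normRCS W (\<Sum>x\<in>I. u x *\<^sub>R x)"
      by (simp add: normRCS_comb[OF assms(1,2)])
    finally show "(\<Sum>x\<in>I. u x * (INF W\<in>(orthSt :: (real^'k^'p) set). normRCS W x)) \<le> normRCS W (\<Sum>x\<in>I. u x *\<^sub>R x)" .
  qed
  have "normReg V (\<Sum>x\<in>I. u x *\<^sub>R x) = (\<Sum>x\<in>I. u x * normRCS V x) - m (\<Sum>x\<in>I. u x *\<^sub>R x)"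
    unfolding normReg_def m_def by (simp add: normRCS_comb[OF assms(1,2)])
  also have "\<dots> \<le> (\<Sum>x\<in>I. u x * normRCS V x) - (\<Sum>x\<in>I. u x * m x)"
    using low by simp
  also have "\<dots> = (\<Sum>x\<in>I. u x * normReg V x)"
    unfolding normReg_def m_def by (simp add: sum_subtractf right_diff_distrib)
  finally show ?thesis .
qed

lemma loss_comb:
  assumes L: "L \<in> loss_choices" and "\<forall>x\<in>I. trace x = 1" "sum u I = 1" "\<forall>x\<in>I. u x \<ge> 0"
    and ne: "(orthSt :: (real^'k^'p) set) \<noteq> {}"
  shows "L (V::real^'k^'p) (\<Sum>x\<in>I. u x *\<^sub>R x) \<le> (\<Sum>x\<in>I. u x * L V x)"
proof -
  have "L = normRCS \<or> L = (\<lambda>V S. - normVar V S) \<or> L = normReg" using L by (auto simp: loss_choices_def)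
  thus ?thesis
  proof (elim disjE)
    assume "L = normRCS" thus ?thesis by (simp add: normRCS_comb[OF assms(2,3)])
  next
    assume "L = (\<lambda>V S. - normVar V S)" thus ?thesis by (simp add: normVar_comb[OF assms(2,3)] sum_negf)
  next
    assume "L = normReg" thus ?thesis using normReg_comb[OF assms(2-4) ne] by simp
  qed
qed


lemma norm_sq_vec: "(norm (x::real^'n))\<^sup>2 = (\<Sum>i\<in>UNIV. x$i * x$i)"
  by (simp add: dot_square_norm[symmetric] inner_vec_def)

lemma trace_cov:
  assumes "centered_dist M" shows "trace (cov M) = (\<integral>x. (norm x)\<^sup>2 \<partial>M)"
proof -
  have sets: "sets M = sets borel" and int: "integrable M (\<lambda>x. (norm x)\<^sup>2)"
    using assms by (auto simp: centered_dist_def)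
  have ii: "integrable M (\<lambda>x. x$i * x$i)" for i
  proof (rule Bochner_Integration.integrable_bound[OF int])
    show "(\<lambda>x. x$i * x$i) \<in> borel_measurable M"
      unfolding measurable_cong_sets[OF sets refl] by (intro borel_measurable_continuous_onI continuous_intros)
    show "AE x in M. norm (x$i * x$i) \<le> norm ((norm x)\<^sup>2)"
    proof (rule AE_I2)
      fix x :: "real^'a"
      have "\<bar>x$i\<bar> * \<bar>x$i\<bar> \<le> norm x * norm x"
        using component_le_norm_cart[of x i] by (intro mult_mono) auto
      thus "norm (x$i * x$i) \<le> norm ((norm x)\<^sup>2)" by (simp add: abs_mult power2_eq_square)
    qed
  qed
  have "(\<integral>x. (norm x)\<^sup>2 \<partial>M) = (\<integral>x. (\<Sum>i\<in>UNIV. x$i * x$i) \<partial>M)"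
    by (simp add: norm_sq_vec)
  also have "\<dots> = (\<Sum>i\<in>UNIV. \<integral>x. x$i * x$i \<partial>M)"
    by (rule Bochner_Integration.integral_sum) (rule ii)
  also have "\<dots> = trace (cov M)" by (simp add: trace_def cov_def)
  finally show ?thesis by simp
qed


lemma Pe_in_Pnorm:
  assumes inst: "valid_instance P w E" and e: "e \<in> {1..E}"
  shows "P e \<in> Pnorm P E"
proof -
  have c: "centered_dist (P e)" and t: "trace (cov (P e)) > 0"
    using inst e by (auto simp: valid_instance_def)
  have eq: "(\<integral>x. (norm x)\<^sup>2 \<partial>P e) = trace (cov (P e))" using trace_cov[OF c] by simp
  have "(1 / trace (cov (P e))) *\<^sub>R cov (P e) \<in> (\<lambda>e. (1 / trace (cov (P e))) *\<^sub>R cov (P e)) ` {1..E}"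
    using e by blast
  hence "(1 / trace (cov (P e))) *\<^sub>R cov (P e) \<in> convex hull ((\<lambda>e. (1 / trace (cov (P e))) *\<^sub>R cov (P e)) ` {1..E})"
    by (rule hull_inc)
  thus ?thesis using c t by (simp add: Pnorm_def eq)
qed

lemma Pnorm_bound:
  fixes P :: "nat \<Rightarrow> (real^'p) measure" and V :: "real^'k^'p"
  assumes inst: "valid_instance P w E" and L: "L \<in> loss_choices"
    and ne: "(orthSt :: (real^'k^'p) set) \<noteq> {}" and Q: "Q \<in> Pnorm P E"
  shows "L V (cov Q) \<le> maxLoss L P E V"
proof -
  define S where "S = (\<lambda>e. (1 / trace (cov (P e))) *\<^sub>R cov (P e)) ` {1..E}"
  define c where "c = (\<integral>x. (norm x)\<^sup>2 \<partial>Q)"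
  have c: "c > 0" and N: "(1 / c) *\<^sub>R cov Q \<in> convex hull S"
    using Q unfolding Pnorm_def c_def S_def by auto
  have fin: "finite S" unfolding S_def by simp
  obtain u where u0: "\<forall>x\<in>S. 0 \<le> u x" and u1: "sum u S = 1"
    and uN: "(\<Sum>x\<in>S. u x *\<^sub>R x) = (1 / c) *\<^sub>R cov Q"
    using N unfolding convex_hull_finite[OF fin] by auto
  have covQ: "cov Q = c *\<^sub>R (\<Sum>x\<in>S. u x *\<^sub>R x)" using c uN by simp
  have tr1: "\<forall>x\<in>S. trace x = 1"
  proof
    fix x assume "x \<in> S"
    then obtain e where e: "e \<in> {1..E}" and x: "x = (1 / trace (cov (P e))) *\<^sub>R cov (P e)"
      unfolding S_def by auto
    have "trace (cov (P e)) > 0" using inst e by (auto simp: valid_instance_def)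
    thus "trace x = 1" unfolding x trace_scale by simp
  qed
  have each: "L V x \<le> maxLoss L P E V" if xS: "x \<in> S" for x
  proof -
    obtain e where e: "e \<in> {1..E}" and x: "x = (1 / trace (cov (P e))) *\<^sub>R cov (P e)"
      using xS unfolding S_def by auto
    have "trace (cov (P e)) > 0" using inst e by (auto simp: valid_instance_def)
    hence "L V x = L V (cov (P e))" unfolding x by (simp add: loss_scale[OF L])
    also have "\<dots> \<le> maxLoss L P E V" unfolding maxLoss_def
      using e by (intro Max_ge) auto
    finally show ?thesis .
  qed
  have "L V (cov Q) = L V (\<Sum>x\<in>S. u x *\<^sub>R x)" unfolding covQ using c by (simp add: loss_scale[OF L])
  also have "\<dots> \<le> (\<Sum>x\<in>S. u x * L V x)" by (rule loss_comb[OF L tr1 u1 u0 ne])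
  also have "\<dots> \<le> (\<Sum>x\<in>S. u x * maxLoss L P E V)"
    by (rule sum_mono) (use u0 each in \<open>auto intro: mult_left_mono\<close>)
  also have "\<dots> = maxLoss L P E V" using u1 by (simp add: sum_distrib_right[symmetric])
  finally show ?thesis .
qed

lemma sup_eq_max:
  fixes P :: "nat \<Rightarrow> (real^'p) measure" and V :: "real^'k^'p"
  assumes inst: "valid_instance P w E" and L: "L \<in> loss_choices"
    and ne: "(orthSt :: (real^'k^'p) set) \<noteq> {}"
  shows "supLoss L P E V = maxLoss L P E V"
proof -
  have E: "1 \<le> E" using inst by (simp add: valid_instance_def)
  have "maxLoss L P E V \<in> (\<lambda>e. L V (cov (P e))) ` {1..E}"
    unfolding maxLoss_def using E by (intro Max_in) auto
  then obtain e where e: "e \<in> {1..E}" and m: "maxLoss L P E V = L V (cov (P e))" by auto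
  show ?thesis unfolding supLoss_def
  proof (rule cSup_eq_maximum)
    show "maxLoss L P E V \<in> (\<lambda>Q. L V (cov Q)) ` Pnorm P E"
      using m Pe_in_Pnorm[OF inst e] by auto
  next
    fix y assume "y \<in> (\<lambda>Q. L V (cov Q)) ` Pnorm P E"
    thus "y \<le> maxLoss L P E V" using Pnorm_bound[OF inst L ne] by auto
  qed
qed



definition sym2 :: "real^'n \<Rightarrow> (real^'n) measure" where
  "sym2 v = distr (measure_pmf (bernoulli_pmf (1/2))) borel (\<lambda>b. if b then v else -v)"

lemma sym2_meas: "(\<lambda>b. if b then v else -v) \<in> measurable (measure_pmf (bernoulli_pmf (1/2))) borel"
  by simp

lemma sym2_integral:
  fixes f :: "real^'n \<Rightarrow> real"
  assumes "f \<in> borel_measurable borel"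
  shows "(\<integral>x. f x \<partial>sym2 v) = (f v + f (-v)) / 2"
  unfolding sym2_def
  by (subst integral_distr[OF sym2_meas assms]) (simp add: field_simps)

lemma sym2_integrable:
  assumes "f \<in> borel_measurable borel"
  shows "integrable (sym2 v) (f :: _ \<Rightarrow> 'b::{banach, second_countable_topology})"
  unfolding sym2_def
  by (subst integrable_distr_eq[OF sym2_meas assms]) (rule integrable_measure_pmf_finite, simp)

lemma sym2_centered: "centered_dist (sym2 (v::real^'n))"
  unfolding centered_dist_def
proof (intro conjI)
  show "prob_space (sym2 v)" unfolding sym2_def
    by (rule prob_space.prob_space_distr[OF prob_space_measure_pmf sym2_meas])
  show "sets (sym2 v) = sets borel" by (simp add: sym2_def)
  show "integrable (sym2 v) (\<lambda>x. x)" by (rule sym2_integrable) simp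
  show "integrable (sym2 v) (\<lambda>x. (norm x)\<^sup>2)" by (rule sym2_integrable) simp
  show "(\<integral>x. x \<partial>sym2 v) = 0" unfolding sym2_def
    by (subst integral_distr[OF sym2_meas], simp, subst integral_measure_pmf[of UNIV])
       (simp_all add: UNIV_bool)
qed

lemma sym2_cov: "cov (sym2 (v::real^'n)) = (\<chi> i j. v$i * v$j)"
proof -
  have "(\<integral>x. x$i * x$j \<partial>sym2 v) = v$i * v$j" for i j
    by (subst sym2_integral) simp_all
  thus ?thesis by (simp add: cov_def)
qed


definition S1 :: "real^2^2" where "S1 = (\<chi> i j. if i = 1 \<and> j = 1 then 1 else 0)"
definition S2 :: "real^2^2" where "S2 = (\<chi> i j. if i = 2 \<and> j = 2 then 1 else 0)"

lemma one_neq_two2: "(1::2) \<noteq> 2" by simp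

lemma cov_e1: "cov (sym2 (\<chi> i. if i = (1::2) then 1 else 0)) = S1"
  by (simp add: sym2_cov S1_def vec_eq_iff)

lemma cov_e2: "cov (sym2 (\<chi> i. if i = (2::2) then 1 else 0)) = S2"
  by (simp add: sym2_cov S2_def vec_eq_iff)

lemma orth12: "(V::real^1^2) \<in> orthSt \<longleftrightarrow> (V$1$1)^2 + (V$2$1)^2 = 1"
  by (simp add: orthSt_def vec_eq_iff matrix_matrix_mult_def transpose_def sum_2 mat_def power2_eq_square)

lemma tv12: "tv (V::real^1^2) S = (V$1$1)^2 * S$1$1 + V$1$1 * V$2$1 * (S$1$2 + S$2$1) + (V$2$1)^2 * S$2$2"
  by (simp add: tv_formula sum_2 power2_eq_square algebra_simps)

lemma tr_S1: "trace S1 = 1" by (simp add: trace_def sum_2 S1_def)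
lemma tr_S2: "trace S2 = 1" by (simp add: trace_def sum_2 S2_def)
lemma tv_S1: "tv (V::real^1^2) S1 = (V$1$1)^2" by (simp add: tv12 S1_def)
lemma tv_S2: "tv (V::real^1^2) S2 = (V$2$1)^2" by (simp add: tv12 S2_def)

definition W0 :: "real^1^2" where "W0 = (\<chi> i j. if i = 1 then 1 else 0)"
definition W1 :: "real^1^2" where "W1 = (\<chi> i j. if i = 2 then 1 else 0)"
definition Wh :: "real^1^2" where "Wh = (\<chi> i j. sqrt 2 / 2)"

lemma W0_orth: "W0 \<in> orthSt" by (simp add: orth12 W0_def)
lemma W1_orth: "W1 \<in> orthSt" by (simp add: orth12 W1_def)
lemma Wh_orth: "Wh \<in> orthSt" by (simp add: orth12 Wh_def power_divide)

lemma ne12: "(orthSt :: (real^1^2) set) \<noteq> {}" using W0_orth by auto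

lemma inf_S1: "(INF W\<in>(orthSt :: (real^1^2) set). normRCS W S1) = 0"
proof (rule antisym)
  show "(INF W\<in>(orthSt :: (real^1^2) set). normRCS W S1) \<le> 0"
    using cINF_lower[OF normRCS_bdd W0_orth, of S1]
    by (simp add: normRCS_tv tr_S1 tv_S1 W0_def)
  show "0 \<le> (INF W\<in>(orthSt :: (real^1^2) set). normRCS W S1)"
  proof (rule cINF_greatest[OF ne12])
    fix W :: "real^1^2" assume "W \<in> orthSt"
    thus "0 \<le> normRCS W S1" using zero_le_power2[of "W$2$1"] by (simp add: normRCS_tv tr_S1 tv_S1 orth12) (smt (verit) zero_le_power2)
  qed
qed

lemma inf_S2: "(INF W\<in>(orthSt :: (real^1^2) set). normRCS W S2) = 0"
proof (rule antisym)
  show "(INF W\<in>(orthSt :: (real^1^2) set). normRCS W S2) \<le> 0"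
    using cINF_lower[OF normRCS_bdd W1_orth, of S2]
    by (simp add: normRCS_tv tr_S2 tv_S2 W1_def)
  show "0 \<le> (INF W\<in>(orthSt :: (real^1^2) set). normRCS W S2)"
  proof (rule cINF_greatest[OF ne12])
    fix W :: "real^1^2" assume "W \<in> orthSt"
    thus "0 \<le> normRCS W S2" using zero_le_power2[of "W$1$1"] by (simp add: normRCS_tv tr_S2 tv_S2 orth12) (smt (verit) zero_le_power2)
  qed
qed

lemma reg_S1: "normReg (V::real^1^2) S1 = normRCS V S1" by (simp add: normReg_def inf_S1)
lemma reg_S2: "normReg (V::real^1^2) S2 = normRCS V S2" by (simp add: normReg_def inf_S2)

lemma loss_vals:
  assumes L: "(L :: real^1^2 \<Rightarrow> real^2^2 \<Rightarrow> real) \<in> loss_choices" and V: "V \<in> orthSt"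
  shows "(L V S1 = 1 - (V$1$1)^2 \<and> L V S2 = 1 - (V$2$1)^2) \<or> (L V S1 = - ((V$1$1)^2) \<and> L V S2 = - ((V$2$1)^2))"
  using L unfolding loss_choices_def
  by (auto simp: reg_S1 reg_S2 normRCS_tv normVar_tv tr_S1 tr_S2 tv_S1 tv_S2)


definition P2 :: "nat \<Rightarrow> (real^2) measure" where
  "P2 e = (if e = 1 then sym2 (\<chi> i. if i = (1::2) then 1 else 0) else sym2 (\<chi> i. if i = (2::2) then 1 else 0))"
definition w2 :: "nat \<Rightarrow> real" where "w2 e = (if e = 1 then 2/3 else 1/3)"

lemma set12: "{1..2::nat} = {1,2}" by auto

lemma covP2_1: "cov (P2 1) = S1" by (simp add: P2_def cov_e1)
lemma covP2_1': "cov (P2 (Suc 0)) = S1" by (simp add: P2_def cov_e1)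
lemma covP2_2: "cov (P2 2) = S2" by (simp add: P2_def cov_e2)

lemma valid2: "valid_instance P2 w2 2"
  unfolding valid_instance_def set12
  by (auto simp: covP2_1 covP2_1' covP2_2 tr_S1 tr_S2 w2_def) (auto simp: P2_def sym2_centered)

lemma maxLoss2: "maxLoss L P2 2 V = max (L V S1) (L V S2)"
  unfolding maxLoss_def set12 by (simp add: covP2_1 covP2_1' covP2_2)

lemma bad:
  assumes L: "(L :: real^1^2 \<Rightarrow> real^2^2 \<Rightarrow> real) \<in> loss_choices" and V: "V \<in> orthSt"
    and z: "V$1$1 = 0 \<or> V$2$1 = 0"
  shows "V \<notin> argminOn orthSt (supLoss L P2 2)"
proof
  assume "V \<in> argminOn orthSt (supLoss L P2 2)"
  hence "supLoss L P2 2 V \<le> supLoss L P2 2 Wh" using Wh_orth by (auto simp: argminOn_def)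
  hence le: "max (L V S1) (L V S2) \<le> max (L Wh S1) (L Wh S2)"
    by (simp add: sup_eq_max[OF valid2 L ne12] maxLoss2)
  have o: "(V$1$1)^2 + (V$2$1)^2 = 1" using V by (simp add: orth12)
  have h: "(Wh$1$1)^2 = 1/2" "(Wh$2$1)^2 = 1/2" by (simp_all add: Wh_def power_divide)
  have "L = normRCS \<or> L = normReg \<or> L = (\<lambda>V S. - normVar V S)" using L by (auto simp: loss_choices_def)
  thus False
  proof (elim disjE)
    assume "L = normRCS" thus False using le o z h
      by (auto simp: normRCS_tv tr_S1 tr_S2 tv_S1 tv_S2)
  next
    assume "L = normReg" thus False using le o z h
      by (auto simp: reg_S1 reg_S2 normRCS_tv tr_S1 tr_S2 tv_S1 tv_S2)
  next
    assume "L = (\<lambda>V S. - normVar V S)" thus False using le o z h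
      by (auto simp: normVar_tv tr_S1 tr_S2 tv_S1 tv_S2)
  qed
qed

lemma pool2: fixes V :: "real^1^2" assumes "V \<in> poolPCA_sols P2 w2 2" shows "V \<in> orthSt \<and> V$2$1 = 0"
proof -
  have V: "V \<in> orthSt" and m: "tv W0 (\<Sum>e\<in>{1..2}. w2 e *\<^sub>R cov (P2 e)) \<le> tv V (\<Sum>e\<in>{1..2}. w2 e *\<^sub>R cov (P2 e))"
    using assms W0_orth unfolding poolPCA_sols_def tv_def by auto
  have "(\<Sum>e\<in>{1..2::nat}. w2 e *\<^sub>R cov (P2 e)) = (2/3) *\<^sub>R S1 + (1/3) *\<^sub>R S2"
    unfolding set12 by (simp add: w2_def covP2_1 covP2_1' covP2_2)
  hence "2/3 * (W0$1$1)^2 + 1/3 * (W0$2$1)^2 \<le> 2/3 * (V$1$1)^2 + 1/3 * (V$2$1)^2"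
    using m by (simp add: tv_add tv_scale tv_S1 tv_S2)
  moreover have "(V$1$1)^2 + (V$2$1)^2 = 1" using V by (simp add: orth12)
  moreover have "(W0$1$1)^2 = 1" "(W0$2$1)^2 = 0" by (simp_all add: W0_def)
  ultimately have "(V$2$1)^2 = 0" using zero_le_power2[of "V$2$1"] by linarith
  thus ?thesis using V by simp
qed

lemma pcaS1: fixes V :: "real^1^2" assumes "V \<in> pcaSols S1" shows "V \<in> orthSt \<and> V$2$1 = 0 \<and> tv V S1 = 1"
proof -
  have V: "V \<in> orthSt" and m: "tv W0 S1 \<le> tv V S1"
    using assms W0_orth unfolding pcaSols_def tv_def by auto
  have o: "(V$1$1)^2 + (V$2$1)^2 = 1" using V by (simp add: orth12)
  have "tv W0 S1 = 1" by (simp add: tv_S1 W0_def)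
  hence "(V$2$1)^2 = 0" using m o zero_le_power2[of "V$2$1"] unfolding tv_S1 by linarith
  hence "V$2$1 = 0" by simp
  thus ?thesis using V o by (simp add: tv_S1)
qed

lemma pcaS2: fixes V :: "real^1^2" assumes "V \<in> pcaSols S2" shows "tv V S2 = 1"
proof -
  have V: "V \<in> orthSt" and m: "tv W1 S2 \<le> tv V S2"
    using assms W1_orth unfolding pcaSols_def tv_def by auto
  have o: "(V$1$1)^2 + (V$2$1)^2 = 1" using V by (simp add: orth12)
  have "tv W1 S2 = 1" by (simp add: tv_S2 W1_def)
  hence "(V$1$1)^2 = 0" using m o zero_le_power2[of "V$1$1"] unfolding tv_S2 by linarith
  hence "V$1$1 = 0" by simp
  thus ?thesis using V o by (simp add: tv_S2)
qed

lemma sep2: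
  fixes Vs :: "nat \<Rightarrow> real^1^2"
  assumes "\<forall>e\<in>{1..2}. Vs e \<in> pcaSols (cov (P2 e))"
  shows "sepPCA P2 2 Vs = Vs 1 \<and> Vs 1 \<in> orthSt \<and> (Vs 1)$2$1 = 0"
proof -
  have a1: "Vs 1 \<in> pcaSols S1" and a2: "Vs 2 \<in> pcaSols S2"
    using assms unfolding set12 by (auto simp: covP2_1' covP2_2)
  define f where "f e = trace (transpose (Vs e) ** cov (P2 e) ** Vs e)" for e
  have f1: "f 1 = 1" using pcaS1[OF a1] by (simp add: f_def covP2_1 covP2_1' tv_def)
  have f2: "f 2 = 1" using pcaS2[OF a2] by (simp add: f_def covP2_2 tv_def)
  have "(LEAST e. e \<in> {1..2} \<and> (\<forall>e'\<in>{1..2}. f e \<le> f e')) = (1::nat)"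
  proof (rule Least_equality)
    show "1 \<in> {1..2::nat} \<and> (\<forall>e'\<in>{1..2}. f 1 \<le> f e')" unfolding set12 using f1 f2 by simp
  next
    fix y assume "y \<in> {1..2::nat} \<and> (\<forall>e'\<in>{1..2}. f y \<le> f e')"
    thus "1 \<le> y" by simp
  qed
  hence "sepPCA P2 2 Vs = Vs 1" unfolding sepPCA_def f_def[abs_def] Let_def by simp
  thus ?thesis using pcaS1[OF a1] by simp
qed

theorem mainTheorem3:
  fixes P :: "nat \<Rightarrow> (real^'p) measure" and w :: "nat \<Rightarrow> real" and E :: nat
    and L :: "real^'k^'p \<Rightarrow> real^'p^'p \<Rightarrow> real" and Vstar :: "real^'k^'p"
  assumes kp: "CARD('k) \<le> CARD('p)"
    and inst: "valid_instance P w E"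
    and L: "L \<in> loss_choices"
    and Vstar: "Vstar \<in> argminOn orthSt (maxLoss L P E)"
  shows
    "(\<forall>V\<in>orthSt. supLoss L P E V = maxLoss L P E V)
   \<and> (\<forall>V\<in>orthSt. \<forall>W\<in>orthSt. maxLoss L P E V < maxLoss L P E W \<longrightarrow> supLoss L P E V < supLoss L P E W)
   \<and> Vstar \<in> argminOn orthSt (supLoss L P E)
   \<and> (\<forall>L' \<in> (loss_choices :: (real^1^2 \<Rightarrow> real^2^2 \<Rightarrow> real) set).
        (\<exists>(P' :: nat \<Rightarrow> (real^2) measure) w' E'. valid_instance P' w' E' \<and>
           (\<forall>V\<in>poolPCA_sols P' w' E'. V \<notin> argminOn orthSt (supLoss L' P' E'))) \<and>
        (\<exists>(P' :: nat \<Rightarrow> (real^2) measure) w' E'. valid_instance P' w' E' \<and>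
           (\<forall>Vs :: nat \<Rightarrow> real^1^2. (\<forall>e\<in>{1..E'}. Vs e \<in> pcaSols (cov (P' e))) \<longrightarrow>
              sepPCA P' E' Vs \<notin> argminOn orthSt (supLoss L' P' E'))))"
proof -
  have ne: "(orthSt :: (real^'k^'p) set) \<noteq> {}" using orthSt_nonempty[OF kp] by auto
  have i: "\<forall>V\<in>orthSt. supLoss L P E V = maxLoss L P E V"
    using sup_eq_max[OF inst L ne] by blast
  have ii: "\<forall>V\<in>orthSt. \<forall>W\<in>orthSt. maxLoss L P E V < maxLoss L P E W \<longrightarrow> supLoss L P E V < supLoss L P E W"
    using i by simp
  have iii: "Vstar \<in> argminOn orthSt (supLoss L P E)"
    using Vstar i by (auto simp: argminOn_def)
  have iv: "\<forall>L' \<in> (loss_choices :: (real^1^2 \<Rightarrow> real^2^2 \<Rightarrow> real) set).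
        (\<exists>(P' :: nat \<Rightarrow> (real^2) measure) w' E'. valid_instance P' w' E' \<and>
           (\<forall>V\<in>poolPCA_sols P' w' E'. V \<notin> argminOn orthSt (supLoss L' P' E'))) \<and>
        (\<exists>(P' :: nat \<Rightarrow> (real^2) measure) w' E'. valid_instance P' w' E' \<and>
           (\<forall>Vs :: nat \<Rightarrow> real^1^2. (\<forall>e\<in>{1..E'}. Vs e \<in> pcaSols (cov (P' e))) \<longrightarrow>
              sepPCA P' E' Vs \<notin> argminOn orthSt (supLoss L' P' E')))"
  proof (intro ballI conjI)
    fix L' :: "real^1^2 \<Rightarrow> real^2^2 \<Rightarrow> real" assume L': "L' \<in> loss_choices"
    show "\<exists>(P' :: nat \<Rightarrow> (real^2) measure) w' E'. valid_instance P' w' E' \<and>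
           (\<forall>V\<in>poolPCA_sols P' w' E'. V \<notin> argminOn orthSt (supLoss L' P' E'))"
    proof (intro exI conjI ballI)
      show "valid_instance P2 w2 2" by (rule valid2)
      fix V :: "real^1^2" assume "V \<in> poolPCA_sols P2 w2 2"
      hence "V \<in> orthSt" "V$2$1 = 0" using pool2 by auto
      thus "V \<notin> argminOn orthSt (supLoss L' P2 2)" using bad[OF L'] by blast
    qed
    show "\<exists>(P' :: nat \<Rightarrow> (real^2) measure) w' E'. valid_instance P' w' E' \<and>
           (\<forall>Vs :: nat \<Rightarrow> real^1^2. (\<forall>e\<in>{1..E'}. Vs e \<in> pcaSols (cov (P' e))) \<longrightarrow>
              sepPCA P' E' Vs \<notin> argminOn orthSt (supLoss L' P' E'))"
    proof (intro exI conjI allI impI)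
      show "valid_instance P2 w2 2" by (rule valid2)
      fix Vs :: "nat \<Rightarrow> real^1^2" assume "\<forall>e\<in>{1..2}. Vs e \<in> pcaSols (cov (P2 e))"
      from sep2[OF this] show "sepPCA P2 2 Vs \<notin> argminOn orthSt (supLoss L' P2 2)"
        using bad[OF L'] by auto
    qed
  qed
  show ?thesis using i ii iii iv by blast
qed

end
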